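(* Let $k\ge 2$ be an integer that is not a prime power. Then there are infinitely many integers $m$ such that $\mathcal F_k^{(m)}$ contains a vertex of level $m$ that is isolated in $\mathcal F_k^{(m)}$.
   Context: The vertex set $V$ consists of all reduced fractions $p/q$ with $p,q\in\mathbb Z$, $\gcd(p,q)=1$, together with $1/0$; here $p/q$ and $(-p)/(-q)$ denote the same vertex. For vertices define $d(p/q,a/b)=|pb-qa|$. The graph $\mathcal F_k$ has vertex set $V$, with an edge between $p/q$ and $a/b$ exactly when $d(p/q,a/b)=k$. The level of a vertex $p/q$ is $\max\{|p|,|q|\}$. For $m\in\mathbb N$, $\mathcal F_k^{(m)}$ is the subgraph of $\mathcal F_k$ induced on the vertices of level at most $m$. A prime power means $p^\ell$ with $p$ prime and $\ell>0$. *)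

theory Defs
  imports Main "HOL-Number_Theory.Number_Theory"
begin

text \<open>A vertex p/q is represented by a pair (p,q) of integers with gcd(p,q) = 1;
  the pairs (p,q) and (-p,-q) represent the same vertex. All notions below are
  invariant under this sign change.\<close>

definition is_vertex :: "int \<times> int \<Rightarrow> bool" where
  "is_vertex v \<longleftrightarrow> coprime (fst v) (snd v)"

definition fdist :: "int \<times> int \<Rightarrow> int \<times> int \<Rightarrow> int" where
  "fdist v w = \<bar>fst v * snd w - snd v * fst w\<bar>"

definition level :: "int \<times> int \<Rightarrow> nat" where
  "level v = nat (max \<bar>fst v\<bar> \<bar>snd v\<bar>)"

definition F_edge :: "nat \<Rightarrow> int \<times> int \<Rightarrow> int \<times> int \<Rightarrow> bool" where
  "F_edge k v w \<longleftrightarrow> is_vertex v \<and> is_vertex w \<and> fdist v w = int k"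

definition isolated_in_Fkm :: "nat \<Rightarrow> nat \<Rightarrow> int \<times> int \<Rightarrow> bool" where
  "isolated_in_Fkm k m v \<longleftrightarrow> is_vertex v \<and> level v \<le> m \<and>
     \<not> (\<exists>w. is_vertex w \<and> level w \<le> m \<and> F_edge k v w)"

end

theory Submission
  imports Defs
begin

lemma core:
  fixes m r s t a b :: int
  assumes r2: "r \<ge> 2" and s2: "s \<ge> 2" and crs: "coprime r s"
    and mdef: "m = s + r*t" and t1: "t \<ge> 1"
    and cab: "coprime a b" and am: "\<bar>a\<bar> \<le> m" and bm: "\<bar>b\<bar> \<le> m"
    and eq: "\<bar>m*b - r*a\<bar> = r*s"
  shows False
proof -
  have "m*b - r*a = r*s \<or> m*b - r*a = -(r*s)" using eq by arith
  then obtain e where e: "e = 1 \<or> e = -1" and eq2: "m*b - r*a = e*(r*s)"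
  proof (elim disjE)
    assume h: "m*b - r*a = r*s"
    show ?thesis using that[of 1] h by simp
  next
    assume h: "m*b - r*a = -(r*s)"
    show ?thesis using that[of "-1"] h by simp
  qed
  have "m*b = r*(a + e*s)" using eq2 by (simp add: algebra_simps)
  hence "r dvd m*b" by simp
  moreover have "coprime r m"
  proof -
    have "gcd r (t*r + s) = gcd r s" by (rule gcd_add_mult)
    thus ?thesis using crs mdef by (simp add: coprime_iff_gcd_eq_1 algebra_simps)
  qed
  ultimately have "r dvd b" using coprime_dvd_mult_right_iff by blast
  then obtain c where bc: "b = r*c" by blast
  have "r*(m*c - a) = r*(e*s)" using eq2 bc by (simp add: algebra_simps)
  hence ac: "a = m*c - e*s" using r2 by simp
  show False
  proof (cases "c = e")
    case True
    have "a = r*(e*t)" using ac True mdef by (simp add: algebra_simps)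
    hence "r dvd a" by simp
    moreover have "r dvd b" using bc by simp
    ultimately have "is_unit r" using cab coprime_common_divisor by blast
    thus False using r2 by simp
  next
    case ne: False
    show False
    proof (cases "c = 0")
      case True
      hence "b = 0" "\<bar>a\<bar> = s" using bc ac e s2 by auto
      thus False using cab s2 by simp
    next
      case nz: False
      have "r*1 \<le> r*t" using t1 r2 by (intro mult_left_mono) auto
      hence mpos: "m \<ge> s + r" using mdef by simp
      have "c \<ge> 2 \<or> c \<le> -2 \<or> c = -e" using ne nz e by auto
      hence "\<bar>a\<bar> > m"
      proof (elim disjE)
        assume "c \<ge> 2"
        hence "m*c \<ge> m*2" using mpos s2 r2 by (intro mult_left_mono) auto
        moreover have "a = m*c - s \<or> a = m*c + s" using ac e by auto
        ultimately show ?thesis using mpos s2 r2 by arith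
      next
        assume "c \<le> -2"
        hence "m*c \<le> m*(-2)" using mpos s2 r2 by (intro mult_left_mono) auto
        moreover have "a = m*c - s \<or> a = m*c + s" using ac e by auto
        ultimately show ?thesis using mpos s2 r2 by arith
      next
        assume "c = -e"
        thus ?thesis using ac e mpos s2 r2 by auto
      qed
      thus False using am by simp
    qed
  qed
qed

lemma cop_shift:
  fixes r s t :: int
  assumes "coprime r s"
  shows "coprime r (s + r*t)"
proof -
  have "gcd r (t*r + s) = gcd r s" by (rule gcd_add_mult)
  thus ?thesis using assms by (simp add: coprime_iff_gcd_eq_1 algebra_simps)
qed

lemma decomp:
  fixes k :: nat
  assumes "k \<ge> 2" and "\<not> primepow k"
  obtains r s where "r \<ge> 2" "s \<ge> 2" "coprime r s" "k = r * s"
proof -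
  obtain p where p: "prime p" "p dvd k" using prime_factor_nat[of k] assms(1) by auto
  define e where "e = multiplicity p k"
  have kne: "k \<noteq> 0" using assms(1) by simp
  have pnu: "\<not> is_unit p" using prime_gt_1_nat[OF p(1)] by simp
  obtain y where y: "k = p^e * y" "\<not> p dvd y"
    by (rule multiplicity_decompose'[OF kne pnu]) (auto simp: e_def)
  have "e > 0" using multiplicity_gt_zero_iff[of k p] kne pnu p(2) e_def by simp
  have p2: "p \<ge> 2" using p by (simp add: prime_ge_2_nat)
  have "p^e \<ge> p^1" using \<open>e > 0\<close> p2 by (intro power_increasing) auto
  hence r2: "p^e \<ge> 2" using p2 by simp
  have "y \<noteq> 0" using y(1) kne by (metis mult_0_right)
  moreover have "y \<noteq> 1"
  proof
    assume "y = 1"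
    hence "primepow k" using y p \<open>e > 0\<close> unfolding primepow_def by auto
    thus False using assms(2) by simp
  qed
  ultimately have y2: "y \<ge> 2" by simp
  have "coprime p y" using p y by (simp add: prime_imp_coprime)
  hence "coprime (p^e) y" by simp
  thus ?thesis using that r2 y2 y by blast
qed

theorem proposition4p9:
  fixes k :: nat
  assumes "k \<ge> 2" and "\<not> primepow k"
  shows "infinite {m :: nat. \<exists>v. level v = m \<and> isolated_in_Fkm k m v}"
proof -
  obtain r s :: nat where r2: "r \<ge> 2" and s2: "s \<ge> 2" and crs: "coprime r s" and k: "k = r*s"
    using decomp assms by blast
  have mem: "s + r*t \<in> {m :: nat. \<exists>v. level v = m \<and> isolated_in_Fkm k m v}" if t1: "t \<ge> 1" for t
  proof -
    define m where "m = s + r*t"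
    define v where "v = (int m, int r)"
    have "r*1 \<le> r*t" using t1 by (rule mult_le_mono2)
    hence mr: "m \<ge> r" unfolding m_def by linarith
    have lv: "level v = m" using mr unfolding level_def v_def by simp
    have crsi: "coprime (int r) (int s)" using crs by simp
    have cm: "coprime (int r) (int m)" using cop_shift[OF crsi, of "int t"] m_def by simp
    have "coprime (int m) (int r)" using cm by (simp only: coprime_commute)
    hence vv: "is_vertex v" unfolding is_vertex_def v_def by simp
    have noedge: False if w: "is_vertex w" "level w \<le> m" "F_edge k v w" for w
    proof -
      obtain a b where ab: "w = (a, b)" by (cases w)
      have cab: "coprime a b" using w(1) ab unfolding is_vertex_def by simp
      have am: "\<bar>a\<bar> \<le> int m" and bm: "\<bar>b\<bar> \<le> int m" using w(2) ab unfolding level_def by auto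
      have "\<bar>int m * b - int r * a\<bar> = int r * int s"
        using w(3) ab k unfolding F_edge_def fdist_def v_def by simp
      thus False using core[of "int r" "int s" "int m" "int t" a b] r2 s2 crsi m_def t1 cab am bm by simp
    qed
    have "isolated_in_Fkm k m v" unfolding isolated_in_Fkm_def using vv lv noedge by blast
    hence "\<exists>v. level v = m \<and> isolated_in_Fkm k m v" using lv by blast
    thus ?thesis unfolding m_def by simp
  qed
  show ?thesis unfolding infinite_nat_iff_unbounded_le
  proof
    fix N :: nat
    have h0: "N + 1 \<le> r*(N+1)" using mult_le_mono1[of 1 r "N+1"] r2 by simp
    have h: "N \<le> s + r*(N+1)" using h0 by linarith
    have m1: "s + r*(N+1) \<in> {m :: nat. \<exists>v. level v = m \<and> isolated_in_Fkm k m v}"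
      using mem[of "N+1"] by simp
    show "\<exists>n\<ge>N. n \<in> {m :: nat. \<exists>v. level v = m \<and> isolated_in_Fkm k m v}"
      by (rule exI[of _ "s + r*(N+1)"], rule conjI, rule h, rule m1)
  qed
qed

end
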